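(* For $n\geq1$ let $\ell_n=\sqrt[n]{n!}$ and $x_n=\log(\ell_{n+1}/\ell_n)$. Then for every integer $n\geq 271$, $$0\leq x_{n+1}+x_n\leq \frac2n-\frac{\log n}{n^2}-\frac{15/16+\log(2\pi)}{n^2}\leq\frac2n.$$
   Context: $\log$ denotes the natural logarithm. *)

theory Defs
  imports Complex_Main
begin

definition ell :: "nat \<Rightarrow> real" where
  "ell n = root n (fact n)"

definition xseq :: "nat \<Rightarrow> real" where
  "xseq n = ln (ell (n + 1) / ell n)"

end

theory Submission
  imports Defs "HOL-Analysis.Gamma_Function" "HOL-Analysis.Harmonic_Numbers" "HOL-Real_Asymp.Real_Asymp"
begin


lemma ln_upper3:
  fixes x :: real assumes "0 \<le> x"
  shows "ln (1 + x) \<le> x - x^2/2 + x^3/3"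
proof -
  let ?f = "\<lambda>t::real. t - t^2/2 + t^3/3 - ln (1 + t)"
  have "?f 0 \<le> ?f x"
  proof (rule DERIV_nonneg_imp_nondecreasing[OF assms])
    fix t :: real assume t: "0 \<le> t" "t \<le> x"
    have "DERIV ?f t :> 1 - t + t^2 - 1/(1+t)"
      using t by (auto intro!: derivative_eq_intros simp: power2_eq_square field_simps)
    moreover have "1 - t + t^2 - 1/(1+t) = t^3/(1+t)"
      using t by (simp add: field_simps power2_eq_square power3_eq_cube)
    moreover have "t^3/(1+t) \<ge> 0" using t by simp
    ultimately show "\<exists>y. DERIV ?f t :> y \<and> y \<ge> 0" by auto
  qed
  then show ?thesis by simp
qed

lemma ln_lower_pade:
  fixes x :: real assumes "0 \<le> x"
  shows "2*x/(2+x) \<le> ln (1 + x)"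
proof -
  let ?f = "\<lambda>t::real. ln (1 + t) - 2*t/(2+t)"
  have "?f 0 \<le> ?f x"
  proof (rule DERIV_nonneg_imp_nondecreasing[OF assms])
    fix t :: real assume t: "0 \<le> t" "t \<le> x"
    have "DERIV ?f t :> 1/(1+t) - 4/(2+t)^2"
      using t apply (intro derivative_eq_intros refl)
      apply (auto simp: power2_eq_square)
      done
    moreover have "1/(1+t) - 4/(2+t)^2 = t^2/((1+t)*(2+t)^2)"
    proof -
      have p: "1 + t > 0" "(2+t)^2 > 0" using t by auto
      have "1/(1+t) - 4/(2+t)^2 = ((2+t)^2 - 4*(1+t))/((1+t)*(2+t)^2)"
      proof -
        have gen: "\<And>a b::real. a \<noteq> 0 \<Longrightarrow> b \<noteq> 0 \<Longrightarrow> 1/a - 4/b = (b - 4*a)/(a*b)"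
          by (simp add: field_simps)
        show ?thesis using gen[of "1+t" "(2+t)^2"] p by simp
      qed
      also have "(2+t)^2 - 4*(1+t) = t^2" by (simp add: power2_eq_square algebra_simps)
      finally show ?thesis .
    qed
    moreover have "t^2/((1+t)*(2+t)^2) \<ge> 0" using t by simp
    ultimately show "\<exists>y. DERIV ?f t :> y \<and> y \<ge> 0" by auto
  qed
  then show ?thesis by simp
qed



definition dd :: "nat \<Rightarrow> real" where
  "dd n = ln (fact n) - (real n + 1/2) * ln (real n) + real n"

lemma ln_fact_Suc: "ln (fact (Suc n) :: real) = ln (real n + 1) + ln (fact n)"
  by (simp add: ln_mult add.commute)

lemma dd_step: assumes "n \<ge> 1"
  shows "dd n - dd (n+1) = (real n + 1/2) * ln (1 + 1/real n) - 1"
proof -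
  have "ln (1 + 1/real n) = ln (real n + 1) - ln (real n)"
  proof -
    have "1 + 1/real n = (real n + 1)/real n" using assms by (simp add: field_simps)
    then show ?thesis using assms by (simp add: ln_div)
  qed
  note e = this
  have f: "ln (fact (n+1)::real) = ln(real n+1) + ln (fact n)" using ln_fact_Suc[of n] by simp
  show ?thesis unfolding dd_def e f by (simp add: algebra_simps)
qed

lemma dd_dec: assumes "n \<ge> 1" shows "dd (n+1) \<le> dd n"
proof -
  have x: "0 \<le> 1/real n" by simp
  have "2*(1/real n)/(2+1/real n) \<le> ln (1 + 1/real n)" by (rule ln_lower_pade[OF x])
  moreover have "2*(1/real n)/(2+1/real n) = 1/(real n + 1/2)"
    using assms by (simp add: field_simps)
  ultimately have "1 \<le> (real n + 1/2) * ln (1 + 1/real n)"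
    by (simp add: field_simps)
  then show ?thesis using dd_step[OF assms] by simp
qed

lemma dd_inc: assumes "n \<ge> 1" shows "dd n - dd (n+1) \<le> 1/(2*real n) - 1/(2*(real n + 1))"
proof -
  define x where "x = 1/real n"
  have x: "0 \<le> x" "x \<le> 1" using assms by (auto simp: x_def)
  have "ln (1 + x) \<le> x - x^2/2 + x^3/3" by (rule ln_upper3[OF x(1)])
  then have "(real n + 1/2) * ln (1 + x) \<le> (real n + 1/2) * (x - x^2/2 + x^3/3)"
    by (intro mult_left_mono) auto
  also have "(real n + 1/2) * (x - x^2/2 + x^3/3) - 1 = x^2/12 + x^3/6"
    using assms by (simp add: x_def field_simps power2_eq_square power3_eq_cube)
  finally have a: "(real n + 1/2) * ln (1 + x) - 1 \<le> x^2/12 + x^3/6" by simp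
  have "x^2/12 + x^3/6 \<le> 1/(2*real n) - 1/(2*(real n + 1))"
  proof -
    have n: "real n \<ge> 1" using assms by simp
    have "1/(2*real n) - 1/(2*(real n + 1)) = 1/(2*real n*(real n+1))"
      using n by (simp add: field_simps)
    moreover have "x^2/12 + x^3/6 = (real n + 2)/(12 * real n^3)"
      using n by (simp add: x_def field_simps power2_eq_square power3_eq_cube)
    moreover have "(real n + 2)/(12 * real n^3) \<le> 1/(2*real n*(real n+1))"
    proof -
      have a: "real n * real n \<ge> real n" using n by simp
      have b: "real n * real n * real n \<ge> real n * real n" using n a by (simp add: mult_le_cancel_left1)
      have p: "(real n + 2)*(2*real n*(real n+1)) \<le> 12*real n^3"
        using a b by (simp add: algebra_simps power3_eq_cube)
      have q: "0 < 12 * real n^3" "0 < 2*real n*(real n+1)" using n by auto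
      show ?thesis using p q by (simp add: frac_le_eq field_simps)
    qed
    ultimately show ?thesis by simp
  qed
  with a show ?thesis using dd_step[OF assms] by (simp add: x_def)
qed

lemma dd_lower_half: assumes "n \<ge> 1" shows "dd n \<ge> 1/2 + 1/(2*real n)"
  using assms
proof (induction n rule: dec_induct)
  case base then show ?case by (simp add: dd_def)
next
  case (step m)
  have "dd m - dd (m+1) \<le> 1/(2*real m) - 1/(2*(real m + 1))" using dd_inc step by auto
  moreover have "1/(2*real m + 2) = 1/(2 + 2*real m)" by (simp add: algebra_simps)
  ultimately show ?case using step by simp
qed



lemma gen: "\<And>P F G m::real. F > 0 \<Longrightarrow> G > 0 \<Longrightarrow> m \<ge> 0 \<Longrightarrow>
      (P*F)^4/(G^2*(2*m+1)) * (4*(m+1)^2/((2*m+1)*(2*m+3))) =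
      (2*P*((m+1)*F))^4 / ((G*(2*m+1)*(2*m+2))^2 * (2*(m+1)+1))"
proof -
  fix P F G m :: real assume a: "F > 0" "G > 0" "m \<ge> 0"
  have nz: "G^2*(2*m+1) * ((2*m+1)*(2*m+3)) \<noteq> 0" "(G*(2*m+1)*(2*m+2))^2 * (2*(m+1)+1) \<noteq> 0"
    using a by auto
  have "(P*F)^4/(G^2*(2*m+1)) * (4*(m+1)^2/((2*m+1)*(2*m+3))) =
        ((P*F)^4 * (4*(m+1)^2)) / (G^2*(2*m+1) * ((2*m+1)*(2*m+3)))" by simp
  also have "\<dots> = (2*P*((m+1)*F))^4 / ((G*(2*m+1)*(2*m+2))^2 * (2*(m+1)+1))"
    using nz by (subst frac_eq_eq) (auto, algebra)
  finally show "(P*F)^4/(G^2*(2*m+1)) * (4*(m+1)^2/((2*m+1)*(2*m+3))) =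
      (2*P*((m+1)*F))^4 / ((G*(2*m+1)*(2*m+2))^2 * (2*(m+1)+1))" .
qed

lemma wallis_closed:
  "(\<Prod>k=1..n. (4*real k^2) / (4*real k^2 - 1)) =
     (2^n * fact n)^4 / ((fact (2*n))^2 * (2*real n + 1))"
proof (induction n)
  case 0 then show ?case by simp
next
  case (Suc n)
  have e: "fact (2 * Suc n) = (fact (2*n) :: real) * (2*real n + 1) * (2*real n + 2)"
    by (simp add: algebra_simps)
  have pos: "fact (2*n) > (0::real)" "2*real n + 1 > 0" "2*real n + 3 > 0" "fact n > (0::real)" by auto
  have "(\<Prod>k=1..Suc n. (4*real k^2) / (4*real k^2 - 1)) =
        (2^n * fact n)^4 / ((fact (2*n))^2 * (2*real n + 1)) * ((4*(real n+1)^2)/(4*(real n+1)^2 - 1))"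
    using Suc by (simp add: ac_simps)
  also have "4*(real n+1)^2 - 1 = (2*real n + 1)*(2*real n + 3)"
    by (simp add: power2_eq_square algebra_simps)
  also have "(2^n * fact n)^4 / ((fact (2*n))^2 * (2*real n + 1)) * ((4*(real n+1)^2)/((2*real n + 1)*(2*real n + 3)))
      = (2^Suc n * fact (Suc n))^4 / ((fact (2*Suc n))^2 * (2*real (Suc n) + 1))"
  proof -
    have h: "(2^n * fact n)^4/((fact (2*n))^2*(2*real n+1)) * (4*(real n+1)^2/((2*real n+1)*(2*real n+3))) =
      (2*2^n*((real n+1)*fact n))^4 / ((fact (2*n)*(2*real n+1)*(2*real n+2))^2 * (2*(real n+1)+1))"
      by (rule gen) (use pos in auto)
    have h1: "(2::real)^Suc n * fact (Suc n) = 2*2^n*((real n+1)*fact n)" by simp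
    have h2: "2*real (Suc n) + 1 = 2*(real n+1)+1" by simp
    show ?thesis unfolding e h1 h2 h ..
  qed
  finally show ?case .
qed

lemma ln_wallis_dd: assumes "n \<ge> 1"
  shows "ln (\<Prod>k=1..n. (4*real k^2) / (4*real k^2 - 1)) =
         - ln 2 + ln (real n) - ln (2*real n + 1) + 4*dd n - 2*dd (2*n)"
proof -
  have pos: "fact (2*n) > (0::real)" "2*real n + 1 > 0" "fact n > (0::real)" "(2::real)^n > 0" by auto
  have "ln ((2^n * fact n)^4 / ((fact (2*n))^2 * (2*real n + 1)) :: real) =
        4*(real n * ln 2 + ln (fact n)) - 2*ln (fact (2*n)) - ln (2*real n + 1)"
    using pos by (simp add: ln_div ln_mult ln_realpow)
  moreover have "ln (real (2*n)) = ln 2 + ln (real n)" using assms by (simp add: ln_mult)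
  ultimately show ?thesis unfolding wallis_closed dd_def
    by (simp add: algebra_simps)
qed

lemma dd_ge: assumes "n \<ge> 1" shows "ln (2*pi)/2 \<le> dd n"
proof -
  define D where "D k = dd (k+1)" for k
  have dec: "decseq D" unfolding D_def
    by (rule decseq_SucI) (simp add: dd_dec[simplified])
  have lb: "\<forall>i. 1/2 \<le> D i"
  proof
    fix i have "1/2 + 1/(2*real (i+1)) \<le> dd (i+1)" by (rule dd_lower_half) simp
    moreover have "0 \<le> 1/(2*real (i+1))" by simp
    ultimately show "1/2 \<le> D i" unfolding D_def by linarith
  qed
  obtain C where C: "D \<longlonglongrightarrow> C" "\<forall>i. C \<le> D i"
    using decseq_convergent[OF dec lb] by blast
  have C2: "(\<lambda>k. D (2*k+1)) \<longlonglongrightarrow> C"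
  proof -
    have "strict_mono (\<lambda>k::nat. 2*k+1)" by (rule strict_monoI) simp
    from LIMSEQ_subseq_LIMSEQ[OF C(1) this] show ?thesis by (simp add: o_def)
  qed
  have L1: "(\<lambda>k::nat. ln (real k + 1) - ln (2 * real k + 3)) \<longlonglongrightarrow> - ln 2" by real_asymp
  have lim1: "(\<lambda>k. - ln 2 + (ln (real k + 1) - ln (2 * real k + 3)) + 4*D k - 2*D (2*k+1))
              \<longlonglongrightarrow> - ln 2 + (- ln 2) + 4*C - 2*C"
    by (intro tendsto_intros L1 C(1) C2)
  have W: "(\<lambda>n. \<Prod>k=1..n. (4*real k^2) / (4*real k^2 - 1)) \<longlonglongrightarrow> pi / 2" by (rule wallis)
  have W1: "(\<lambda>k. \<Prod>j=1..k+1. (4*real j^2) / (4*real j^2 - 1)) \<longlonglongrightarrow> pi / 2"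
    using LIMSEQ_Suc[OF W] by simp
  have lim2: "(\<lambda>k. ln (\<Prod>j=1..k+1. (4*real j^2) / (4*real j^2 - 1))) \<longlonglongrightarrow> ln (pi / 2)"
    by (intro tendsto_intros W1) simp
  have eq: "ln (\<Prod>j=1..k+1. (4*real j^2) / (4*real j^2 - 1)) =
            - ln 2 + (ln (real k + 1) - ln (2 * real k + 3)) + 4*D k - 2*D (2*k+1)" for k
  proof -
    have "ln (\<Prod>j=1..k+1. (4*real j^2) / (4*real j^2 - 1)) =
         - ln 2 + ln (real (k+1)) - ln (2*real (k+1) + 1) + 4*dd (k+1) - 2*dd (2*(k+1))"
      by (rule ln_wallis_dd) simp
    moreover have "2*(k+1) = (2*k+1)+1" by simp
    ultimately show ?thesis unfolding D_def by (simp add: algebra_simps)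
  qed
  have "ln (pi/2) = - ln 2 + (- ln 2) + 4*C - 2*C"
    using LIMSEQ_unique[OF lim2] lim1 unfolding eq by blast
  then have "ln pi - ln 2 = - 2* ln 2 + 2*C" by (simp add: ln_div)
  then have "ln (2*pi)/2 = C" by (simp add: ln_mult)
  moreover have "dd n = D (n-1)" using assms unfolding D_def by simp
  ultimately show ?thesis using C(2) by simp
qed



lemma ln_ell: "k > 0 \<Longrightarrow> ln (ell k) = ln (fact k) / real k"
  unfolding ell_def by (rule ln_root)

lemma ell_pos: "k > 0 \<Longrightarrow> ell k > 0"
  unfolding ell_def by simp

lemma xseq_eq: "k > 0 \<Longrightarrow> xseq k = ln (fact (k+1)) / real (k+1) - ln (fact k) / real k"
  unfolding xseq_def using ell_pos[of k] ell_pos[of "k+1"]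
  by (simp add: ln_div ln_ell del: of_nat_Suc fact_Suc)

theorem mainTheorem9:
  fixes n :: nat
  assumes "n \<ge> 271"
  shows "0 \<le> xseq (n + 1) + xseq n
    \<and> xseq (n + 1) + xseq n \<le> 2 / real n - ln (real n) / (real n)^2
          - (15/16 + ln (2 * pi)) / (real n)^2
    \<and> 2 / real n - ln (real n) / (real n)^2
          - (15/16 + ln (2 * pi)) / (real n)^2 \<le> 2 / real n"
proof -
  define N where "N = real n"
  define L where "L = ln N"
  define A where "A = ln (fact n :: real)"
  define P where "P = ln (2*pi)"
  define l1 where "l1 = ln (N+1)"
  define l2 where "l2 = ln (N+2)"
  define c where "c = 15/16 + P"
  have N: "N \<ge> 271" using assms unfolding N_def by simp
  have n0: "n > 0" using assms by simp
  have fa: "ln (fact (n+2) :: real) = A + l1 + l2"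
  proof -
    have "(fact (n+2) :: real) = fact n * (N+1) * (N+2)"
      unfolding N_def by (simp add: algebra_simps)
    then show ?thesis unfolding A_def l1_def l2_def N_def by (simp add: ln_mult add.commute)
  qed
  have S: "xseq (n+1) + xseq n = (N*(l1+l2) - 2*A)/(N*(N+2))"
  proof -
    have "xseq (n+1) + xseq n = ln (fact (n+2)) / real (n+2) - ln (fact n) / real n"
      using xseq_eq[of n] xseq_eq[of "n+1"] n0 by (simp add: add.assoc)
    also have "\<dots> = (A + l1 + l2)/(N+2) - A/N" unfolding fa by (simp add: A_def N_def)
    also have "\<dots> = (N*(l1+l2) - 2*A)/(N*(N+2))" using N by (simp add: field_simps)
    finally show ?thesis .
  qed
  have Ld: "L \<le> l1" "L \<le> l2" using N unfolding L_def l1_def l2_def by auto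
  have Aup: "A \<le> N * L"
  proof -
    have "(fact n :: real) \<le> of_nat (n^n)" by (rule fact_le_power)
    then have "A \<le> ln (real n ^ n)" unfolding A_def by (intro ln_mono) auto
    then show ?thesis unfolding L_def N_def by (simp add: ln_realpow)
  qed
  have "2*A \<le> N*(l1+l2)"
  proof -
    have "N*L \<le> N*l1" "N*L \<le> N*l2" using Ld N by (auto intro: mult_left_mono)
    then show ?thesis using Aup by (simp add: algebra_simps)
  qed
  then have low: "0 \<le> xseq (n+1) + xseq n" unfolding S using N by simp
  have Alow: "A \<ge> (N + 1/2)*L - N + P/2"
    using dd_ge[of n] n0 unfolding dd_def A_def L_def N_def P_def by simp
  define a' where "a' = ln (1 + 1/N)"
  define b' where "b' = ln (1 + 2/N)"
  have l1e: "l1 = L + a'"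
  proof -
    have "N + 1 = N * (1 + 1/N)" using N by (simp add: field_simps)
    moreover have "0 < 1/N" using N by simp
    then have "0 < 1 + 1/N" by linarith
    ultimately show ?thesis unfolding l1_def L_def a'_def using N by (simp add: ln_mult)
  qed
  have l2e: "l2 = L + b'"
  proof -
    have "N + 2 = N * (1 + 2/N)" using N by (simp add: field_simps)
    moreover have "0 < 2/N" using N by simp
    then have "0 < 1 + 2/N" by linarith
    ultimately show ?thesis unfolding l2_def L_def b'_def using N by (simp add: ln_mult)
  qed
  define u where "u = N*a' + N*b'"
  have ub: "u*N \<le> 3*N - 5/2 + 3/N"
  proof -
    have a1: "a' \<le> 1/N - (1/N)^2/2 + (1/N)^3/3" unfolding a'_def by (rule ln_upper3) (use N in simp)
    have b1: "b' \<le> 2/N - (2/N)^2/2 + (2/N)^3/3" unfolding b'_def by (rule ln_upper3) (use N in simp)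
    have "u*N = (a' + b')*(N*N)" unfolding u_def by (simp add: algebra_simps)
    also have "\<dots> \<le> ((1/N - (1/N)^2/2 + (1/N)^3/3) + (2/N - (2/N)^2/2 + (2/N)^3/3))*(N*N)"
      using a1 b1 N by (intro mult_right_mono) auto
    also have "\<dots> = 3*N - 5/2 + 3/N" using N by (simp add: field_simps power2_eq_square power3_eq_cube)
    finally show ?thesis .
  qed
  define X where "X = N*(l1+l2) - 2*A"
  have Xb: "X \<le> u - L + 2*N - P"
    unfolding X_def u_def l1e l2e using Alow by (simp add: algebra_simps)
  have f1: "X*N \<le> u*N - L*N + 2*N*N - P*N"
  proof -
    have "X*N \<le> (u - L + 2*N - P)*N" using Xb N by (intro mult_right_mono) auto
    then show ?thesis by (simp add: algebra_simps)
  qed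
  have f3: "3/N \<le> 3/271" using N by (intro divide_left_mono) auto
  have f4: "L \<le> 9 * ln 2 + N/271 - 1"
  proof -
    have "ln (N/271) \<le> N/271 - 1" using N by (intro ln_le_minus_one) simp
    moreover have "ln (N/271) = L - ln 271" unfolding L_def using N by (simp add: ln_div)
    moreover have "ln (271::real) \<le> ln (2^9)" by simp
    moreover have "ln ((2::real)^9) = 9 * ln 2" by (subst ln_realpow) auto
    ultimately show ?thesis by linarith
  qed
  have f5: "P \<le> 3 * ln 2"
  proof -
    have "2*pi \<le> (2::real)^3" using pi_less_4 by simp
    then have "P \<le> ln ((2::real)^3)" unfolding P_def by simp
    moreover have "ln ((2::real)^3) = 3 * ln 2" by (subst ln_realpow) auto
    ultimately show ?thesis by simp
  qed
  have f6: "ln (2::real) \<le> 25/36" by (rule ln2_le_25_over_36)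
  have key: "X*N \<le> 2*N*N + 4*N - L*N - 2*L - (15/16)*N - P*N - 2*(15/16 + P)"
  proof -
    have k1: "0 \<le> N/16 - 2*L - 2*P + 5/8 - 3/N" using f3 f4 f5 f6 N by linarith
    show ?thesis using f1 ub k1 by argo
  qed
  have R: "(2*N - L - c)*(N+2) = 2*N*N + 4*N - L*N - 2*L - (15/16)*N - P*N - 2*(15/16 + P)"
    unfolding c_def by (simp add: algebra_simps) argo
  have "X/(N*(N+2)) \<le> (2*N - L - c)/N^2"
  proof -
    have k: "X*N \<le> (2*N - L - c)*(N+2)" using key R by simp
    have "X/(N*(N+2)) = (X*N)/(N^2*(N+2))" using N by (simp add: power2_eq_square)
    also have "\<dots> \<le> ((2*N - L - c)*(N+2))/(N^2*(N+2))"
      using k N by (intro divide_right_mono) auto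
    also have "\<dots> = (2*N - L - c)/N^2" using N by simp
    finally show ?thesis .
  qed
  moreover have "(2*N - L - c)/N^2 = 2 / N - L / N^2 - c / N^2"
    using N by (simp add: field_simps power2_eq_square)
  ultimately have up: "xseq (n + 1) + xseq n \<le> 2 / N - L / N^2 - c / N^2"
    unfolding S X_def by simp
  have "0 \<le> L + c"
  proof -
    have "0 \<le> L" unfolding L_def using N by simp
    moreover have "0 \<le> P" unfolding P_def using pi_ge_two by simp
    ultimately show ?thesis unfolding c_def by simp
  qed
  then have "L/N^2 + c/N^2 \<ge> 0" using N by (simp add: add_divide_distrib[symmetric])
  then have third: "2 / N - L / N^2 - c / N^2 \<le> 2 / N" by simp
  show ?thesis using low up third unfolding N_def L_def c_def P_def by simp
qed


end
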